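(* Let $s$ be a positive integer. There exists a linear $(2,s-1,s,2)$-AONT if and only if $s\ge4$.
   Context: For integers $1\le t_i\le t_o\le s$, a linear $(t_i,t_o,s,q)$-AONT is given by an invertible $s\times s$ matrix $M$ over $\mathbb{F}_q$ defining the map $\mathbf{x}\mapsto\mathbf{y}=\mathbf{x}M^{-1}$ on row vectors of $\mathbb{F}_q^s$, such that for every set $I$ of $t_i$ input coordinates and every set $J$ of $s-t_o$ output coordinates, the pair $((x_i)_{i\in I},(y_j)_{j\in J})$ takes every value in $\mathbb{F}_q^{t_i+s-t_o}$ equally often as $\mathbf{x}$ ranges over $\mathbb{F}_q^s$. Equivalently, $M$ is invertible and every $t_o\times t_i$ submatrix of $M$ has rank $t_i$. (Such an object requires $t_i\le t_o$, so none exists with $t_i=2>t_o=s-1$.) *)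

theory Defs
  imports "HOL-Analysis.Analysis"
begin

text \<open>Linear (t_i, t_o, s, q)-AONT over the finite field 'a (q = CARD('a)),
  with s = CARD('n).  The invertible matrix M defines the map x \<mapsto> y = x M^{-1}
  on row vectors.\<close>

definition linear_AONT :: "nat \<Rightarrow> nat \<Rightarrow> ('a::{field,finite})^'n^'n \<Rightarrow> bool" where
  "linear_AONT ti to M \<longleftrightarrow>
     1 \<le> ti \<and> ti \<le> to \<and> to \<le> CARD('n) \<and> invertible M \<and>
     (\<forall>I J. card I = ti \<longrightarrow> card J = CARD('n) - to \<longrightarrow>
        (\<forall>a\<in>I \<rightarrow>\<^sub>E (UNIV::'a set). \<forall>b\<in>J \<rightarrow>\<^sub>E (UNIV::'a set).
         \<forall>a'\<in>I \<rightarrow>\<^sub>E (UNIV::'a set). \<forall>b'\<in>J \<rightarrow>\<^sub>E (UNIV::'a set).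
           card {x::'a^'n. restrict (\<lambda>i. x $ i) I = a \<and>
                            restrict (\<lambda>j. (x v* matrix_inv M) $ j) J = b}
         = card {x::'a^'n. restrict (\<lambda>i. x $ i) I = a' \<and>
                            restrict (\<lambda>j. (x v* matrix_inv M) $ j) J = b'}))"

end

theory Submission imports Defs begin

lemma restrict_eq_iff:
  assumes "a \<in> I \<rightarrow>\<^sub>E B"
  shows "restrict g I = a \<longleftrightarrow> (\<forall>i\<in>I. g i = a i)"
  using assms by (auto simp: fun_eq_iff PiE_def extensional_def restrict_def)

lemma matrix_inv_props:
  fixes A :: "'a::field^'n^'n"
  assumes "invertible A"
  shows "A ** matrix_inv A = mat 1 \<and> matrix_inv A ** A = mat 1"
  using assms unfolding invertible_def matrix_inv_def by (rule someI_ex)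

lemma invertible_matrix_inv:
  fixes A :: "'a::field^'n^'n"
  assumes "invertible A"
  shows "invertible (matrix_inv A)"
  using matrix_inv_props[OF assms] unfolding invertible_def by blast

lemma inv_unique:
  fixes A B C :: "'a::field^'n^'n"
  assumes "B ** A = mat 1" "A ** C = mat 1"
  shows "B = C"
  by (metis assms matrix_mul_assoc matrix_mul_lid matrix_mul_rid)

lemma matrix_inv_inv:
  fixes A :: "'a::field^'n^'n"
  assumes "invertible A"
  shows "matrix_inv (matrix_inv A) = A"
  using matrix_inv_props[OF assms] matrix_inv_props[OF invertible_matrix_inv[OF assms]]
  by (metis inv_unique)

lemma vm_nth: "(x v* N) $ j = (\<Sum>i\<in>UNIV. x $ i * N $ i $ j)"
  by (simp add: vector_matrix_mult_def)

lemma fiber_card_eq: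
  fixes N :: "'a::field^'n::finite^'n"
  assumes a: "a \<in> I \<rightarrow>\<^sub>E (UNIV::'a set)" and b: "b \<in> J \<rightarrow>\<^sub>E (UNIV::'a set)"
    and a': "a' \<in> I \<rightarrow>\<^sub>E (UNIV::'a set)" and b': "b' \<in> J \<rightarrow>\<^sub>E (UNIV::'a set)"
    and z: "(\<forall>i\<in>I. z $ i = a i) \<and> (\<forall>j\<in>J. (z v* N) $ j = b j)"
    and z': "(\<forall>i\<in>I. z' $ i = a' i) \<and> (\<forall>j\<in>J. (z' v* N) $ j = b' j)"
  shows "card {x::'a^'n. restrict (\<lambda>i. x $ i) I = a \<and> restrict (\<lambda>j. (x v* N) $ j) J = b}
       = card {x::'a^'n. restrict (\<lambda>i. x $ i) I = a' \<and> restrict (\<lambda>j. (x v* N) $ j) J = b'}"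
proof -
  let ?F1 = "{x::'a^'n. restrict (\<lambda>i. x $ i) I = a \<and> restrict (\<lambda>j. (x v* N) $ j) J = b}"
  let ?F2 = "{x::'a^'n. restrict (\<lambda>i. x $ i) I = a' \<and> restrict (\<lambda>j. (x v* N) $ j) J = b'}"
  have F1: "?F1 = {x. (\<forall>i\<in>I. x $ i = a i) \<and> (\<forall>j\<in>J. (x v* N) $ j = b j)}"
    using restrict_eq_iff[OF a] restrict_eq_iff[OF b] by blast
  have F2: "?F2 = {x. (\<forall>i\<in>I. x $ i = a' i) \<and> (\<forall>j\<in>J. (x v* N) $ j = b' j)}"
    using restrict_eq_iff[OF a'] restrict_eq_iff[OF b'] by blast
  have lin: "(x - y + w) v* N = x v* N - y v* N + w v* N" for x y w :: "'a^'n"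
    by (simp add: vector_matrix_mult_def vec_eq_iff sum_subtractf sum.distrib algebra_simps)
  have "bij_betw (\<lambda>x. x - z + z') ?F1 ?F2"
    apply (rule bij_betw_byWitness[where f' = "\<lambda>x. x - z' + z"])
    using z z' by (auto simp: F1 F2 lin)
  then show ?thesis by (rule bij_betw_same_card)
qed

lemma exists_z:
  fixes N :: "'a::field^'n::finite^'n"
  assumes k: "k \<notin> I" "N $ k $ j \<noteq> 0"
  shows "\<exists>z. (\<forall>i\<in>I. z $ i = a i) \<and> (z v* N) $ j = bj"
proof -
  define c where "c = (bj - (\<Sum>i\<in>I. a i * N $ i $ j)) / N $ k $ j"
  define z :: "'a^'n" where "z = (\<chi> i. if i \<in> I then a i else if i = k then c else 0)"
  have "(z v* N) $ j = (\<Sum>i\<in>UNIV. (if i \<in> I then a i * N $ i $ j else (if i = k then c * N $ i $ j else 0)))"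
    unfolding vm_nth z_def by (intro sum.cong) auto
  also have "\<dots> = (\<Sum>i\<in>I. a i * N $ i $ j) + (\<Sum>i\<in>UNIV - I. (if i = k then c * N $ i $ j else 0))"
    by (simp add: sum.If_cases Int_absorb1 Diff_eq)
  also have "(\<Sum>i\<in>UNIV - I. (if i = k then c * N $ i $ j else 0)) = c * N $ k $ j"
    using k(1) by (simp add: sum.delta)
  also have "(\<Sum>i\<in>I. a i * N $ i $ j) + c * N $ k $ j = bj"
    using k(2) unfolding c_def by (simp add: field_simps)
  finally have "(z v* N) $ j = bj" .
  moreover have "\<forall>i\<in>I. z $ i = a i" unfolding z_def by simp
  ultimately show ?thesis by blast
qed

lemma AONT_suff:
  fixes N :: "'a::{field,finite}^'n::finite^'n"
  assumes inv: "invertible N"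
    and col: "\<And>I j. card I = 2 \<Longrightarrow> \<exists>k. k \<notin> I \<and> N $ k $ j \<noteq> 0"
    and s: "3 \<le> CARD('n)"
  shows "linear_AONT 2 (CARD('n) - 1) (matrix_inv N)"
  unfolding linear_AONT_def
proof (intro conjI allI impI ballI)
  show "1 \<le> (2::nat)" by simp
  show "2 \<le> CARD('n) - 1" using s by simp
  show "CARD('n) - 1 \<le> CARD('n)" by simp
  show "invertible (matrix_inv N)" using invertible_matrix_inv[OF inv] .
  fix I J :: "'n set" and a b a' b'
  assume I: "card I = 2" and J: "card J = CARD('n) - (CARD('n) - 1)"
    and a: "a \<in> I \<rightarrow>\<^sub>E (UNIV::'a set)" and b: "b \<in> J \<rightarrow>\<^sub>E (UNIV::'a set)"
    and a': "a' \<in> I \<rightarrow>\<^sub>E (UNIV::'a set)" and b': "b' \<in> J \<rightarrow>\<^sub>E (UNIV::'a set)"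
  have "card J = 1" using J s by simp
  then obtain j where Jj: "J = {j}" by (rule card_1_singletonE)
  obtain k where k: "k \<notin> I" "N $ k $ j \<noteq> 0" using col[OF I] by blast
  obtain z where z: "(\<forall>i\<in>I. z $ i = a i) \<and> (z v* N) $ j = b j"
    using exists_z[OF k] by blast
  obtain z' where z': "(\<forall>i\<in>I. z' $ i = a' i) \<and> (z' v* N) $ j = b' j"
    using exists_z[OF k] by blast
  show "card {x::'a^'n. restrict (\<lambda>i. x $ i) I = a \<and> restrict (\<lambda>j. (x v* matrix_inv (matrix_inv N)) $ j) J = b}
       = card {x::'a^'n. restrict (\<lambda>i. x $ i) I = a' \<and> restrict (\<lambda>j. (x v* matrix_inv (matrix_inv N)) $ j) J = b'}"
    unfolding matrix_inv_inv[OF inv]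
    by (rule fiber_card_eq[OF a b a' b']) (use z z' Jj in auto)
qed

lemma construction:
  fixes p :: "'n::finite"
  defines "N \<equiv> (\<chi> i. \<chi> k. if i = k \<and> i \<noteq> p then 0 else 1) :: 'a::field^'n^'n"
  shows "invertible N"
proof -
  have "x = 0" if x: "N *v x = 0" for x :: "'a^'n"
  proof -
    define S where "S = (\<Sum>k\<in>UNIV. x $ k)"
    have row: "(N *v x) $ i = S - (if i \<noteq> p then x $ i else 0)" for i
    proof -
      have "(N *v x) $ i = (\<Sum>k\<in>UNIV. x $ k - (if k = i then (if i \<noteq> p then x $ k else 0) else 0))"
        unfolding N_def matrix_vector_mult_def by (auto intro!: sum.cong)
      also have "\<dots> = S - (if i \<noteq> p then x $ i else 0)"
        unfolding S_def by (simp add: sum_subtractf sum.delta)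
      finally show ?thesis .
    qed
    have S0: "S = 0" using row[of p] x by simp
    have oth: "x $ i = 0" if "i \<noteq> p" for i
      using row[of i] x S0 that by simp
    have "S = x $ p"
    proof -
      have "S = (\<Sum>k\<in>UNIV. if k = p then x $ p else 0)"
        unfolding S_def by (rule sum.cong) (auto simp: oth)
      then show ?thesis by simp
    qed
    then have "x $ p = 0" using S0 by simp
    then show "x = 0" using oth by (metis vec_eq_iff zero_index)
  qed
  then have "\<exists>B. B ** N = mat 1" using matrix_left_invertible_ker by blast
  then show ?thesis using invertible_left_inverse by blast
qed

lemma card2_field:
  assumes "CARD('a::{field,finite}) = 2"
  shows "(UNIV::'a set) = {0,1}" and "(1::'a) + 1 = 0"
proof -
  have "{0,1} \<subseteq> (UNIV::'a set)" by simp
  moreover have "card {0::'a,1} = 2" by simp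
  ultimately show U: "(UNIV::'a set) = {0,1}"
    by (metis assms card_subset_eq finite)
  have "(1::'a) + 1 \<noteq> 1" by (metis add_cancel_right_right zero_neq_one)
  then show "(1::'a) + 1 = 0" using U by blast
qed

lemma no_s3:
  fixes M :: "'a::{field,finite}^'n::finite^'n"
  assumes q: "CARD('a) = 2" and s: "CARD('n) = 3"
    and A: "linear_AONT 2 (CARD('n) - 1) M"
  shows False
proof -
  have invM: "invertible M" using A unfolding linear_AONT_def by (elim conjE) assumption
  define N where "N = matrix_inv M"
  have inv: "invertible N" unfolding N_def using invertible_matrix_inv[OF invM] .
  show False
  proof (cases "\<exists>i0 j. N $ i0 $ j = 0")
    case True
    then obtain i0 j where z: "N $ i0 $ j = 0" by blast
    define I where "I = UNIV - {i0}"
    have cI: "card I = 2" unfolding I_def using s by (simp add: card_Diff_singleton)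
    have cJ: "card {j} = CARD('n) - (CARD('n) - 1)" using s by simp
    define a where "a = restrict (\<lambda>_. 0::'a) I"
    define b where "b = restrict (\<lambda>_. 0::'a) {j}"
    define b' where "b' = restrict (\<lambda>_. 1::'a) {j}"
    have ab: "a \<in> I \<rightarrow>\<^sub>E UNIV" "b \<in> {j} \<rightarrow>\<^sub>E UNIV" "b' \<in> {j} \<rightarrow>\<^sub>E UNIV"
      unfolding a_def b_def b'_def by auto
    have eq: "card {x::'a^'n. restrict (\<lambda>i. x $ i) I = a \<and> restrict (\<lambda>j. (x v* N) $ j) {j} = b}
       = card {x::'a^'n. restrict (\<lambda>i. x $ i) I = a \<and> restrict (\<lambda>j. (x v* N) $ j) {j} = b'}"
    proof -
      have H: "\<forall>I J. card I = 2 \<longrightarrow> card J = CARD('n) - (CARD('n) - 1) \<longrightarrow>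
        (\<forall>a\<in>I \<rightarrow>\<^sub>E (UNIV::'a set). \<forall>b\<in>J \<rightarrow>\<^sub>E (UNIV::'a set).
         \<forall>a'\<in>I \<rightarrow>\<^sub>E (UNIV::'a set). \<forall>b'\<in>J \<rightarrow>\<^sub>E (UNIV::'a set).
           card {x::'a^'n. restrict (\<lambda>i. x $ i) I = a \<and>
                            restrict (\<lambda>j. (x v* N) $ j) J = b}
         = card {x::'a^'n. restrict (\<lambda>i. x $ i) I = a' \<and>
                            restrict (\<lambda>j. (x v* N) $ j) J = b'})"
        using A unfolding linear_AONT_def N_def by (elim conjE) assumption
      show ?thesis
        using H[rule_format, OF cI cJ ab(1) ab(2) ab(1) ab(3)] .
    qed
    have "0 \<in> {x::'a^'n. restrict (\<lambda>i. x $ i) I = a \<and> restrict (\<lambda>j. (x v* N) $ j) {j} = b}"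
      unfolding a_def b_def by (auto simp: vm_nth restrict_def fun_eq_iff)
    then have pos: "card {x::'a^'n. restrict (\<lambda>i. x $ i) I = a \<and> restrict (\<lambda>j. (x v* N) $ j) {j} = b} > 0"
      by (subst card_gt_0_iff) auto
    have E: "{x::'a^'n. restrict (\<lambda>i. x $ i) I = a \<and> restrict (\<lambda>j. (x v* N) $ j) {j} = b'} = {}"
    proof (rule ccontr)
      assume "\<not> ?thesis"
      then obtain x :: "'a^'n" where x: "restrict (\<lambda>i. x $ i) I = a" "restrict (\<lambda>j. (x v* N) $ j) {j} = b'"
        by blast
      have xi: "x $ i = 0" if "i \<noteq> i0" for i
        using fun_cong[OF x(1), of i] that unfolding a_def I_def by simp
      have "(x v* N) $ j = 1"
        using fun_cong[OF x(2), of j] unfolding b'_def by simp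
      moreover have "(x v* N) $ j = 0"
      proof -
        have "x $ i * N $ i $ j = 0" for i by (cases "i = i0") (simp_all add: z xi)
        then show ?thesis unfolding vm_nth by (intro sum.neutral ballI)
      qed
      ultimately show False by simp
    qed
    have "card {x::'a^'n. restrict (\<lambda>i. x $ i) I = a \<and> restrict (\<lambda>j. (x v* N) $ j) {j} = b'} > 0"
      using eq pos by linarith
    then show False unfolding E by simp
  next
    case False
    have one: "N $ i $ k = 1" for i k
    proof -
      have "N $ i $ k \<in> {0,1}" by (simp add: card2_field(1)[OF q, symmetric])
      then show ?thesis using False by auto
    qed
    obtain u :: 'n where True by blast
    have "card (UNIV - {u}) = 2" using s by (simp add: card_Diff_singleton)
    then have "UNIV - {u} \<noteq> {}" by (metis card.empty zero_neq_numeral)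
    then obtain v where uv: "v \<noteq> u" by blast
    define x :: "'a^'n" where "x = (\<chi> k. if k = u \<or> k = v then 1 else 0)"
    have "N *v x = 0"
    proof -
      have "(N *v x) $ i = 0" for i
      proof -
        have "(N *v x) $ i = (\<Sum>k\<in>UNIV. if k \<in> {u,v} then 1 else 0)"
          unfolding matrix_vector_mult_def x_def by (auto simp: one intro!: sum.cong)
        also have "\<dots> = (\<Sum>k\<in>{u,v}. 1)"
          by (simp add: sum.If_cases Int_absorb1 insert_compr[symmetric] Collect_disj_eq insert_commute)
        also have "\<dots> = 1 + 1" using uv by simp
        finally show ?thesis using card2_field(2)[OF q] by simp
      qed
      then show ?thesis by (simp add: vec_eq_iff)
    qed
    then have "x = 0"
      using inj_matrix_vector_mult[OF inv] by (metis injD matrix_vector_mult_0_right)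
    moreover have "x $ u = 1" unfolding x_def by simp
    ultimately show False by simp
  qed
qed

theorem mainTheorem15:
  assumes "CARD('a::{field,finite}) = 2"
  shows "(\<exists>M :: 'a^'n::finite^'n. linear_AONT 2 (CARD('n) - 1) M) \<longleftrightarrow> CARD('n) \<ge> 4"
proof
  assume "\<exists>M :: 'a^'n::finite^'n. linear_AONT 2 (CARD('n) - 1) M"
  then obtain M :: "'a^'n^'n" where M: "linear_AONT 2 (CARD('n) - 1) M" by blast
  then have "2 \<le> CARD('n) - 1" unfolding linear_AONT_def by (elim conjE) assumption
  moreover have "CARD('n) \<noteq> 3" using no_s3[OF assms _ M] by blast
  ultimately show "CARD('n) \<ge> 4" by linarith
next
  assume s: "CARD('n) \<ge> 4"
  define p :: 'n where "p = undefined"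
  define N :: "'a^'n^'n" where "N = (\<chi> i. \<chi> k. if i = k \<and> i \<noteq> p then 0 else 1)"
  have inv: "invertible N" unfolding N_def by (rule construction)
  have col: "\<exists>k. k \<notin> I \<and> N $ k $ j \<noteq> 0" if I: "card I = 2" for I j
  proof -
    have "card (I \<union> {j}) \<le> 3"
      using card_Un_le[of I "{j}"] I by simp
    then have "card (UNIV - (I \<union> {j})) \<ge> 1"
      using s by (simp add: card_Diff_subset)
    then have "UNIV - (I \<union> {j}) \<noteq> {}" by (metis card.empty not_one_le_zero)
    then obtain k where "k \<notin> I" "k \<noteq> j" by blast
    then show ?thesis unfolding N_def by auto
  qed
  show "\<exists>M :: 'a^'n::finite^'n. linear_AONT 2 (CARD('n) - 1) M"
    using AONT_suff[OF inv col] s by auto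
qed

end
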